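(* Let $C$ be a conformal algebra and $t(b_1,\dots,b_n)$ a non-associative monomial obtained from $b_1\cdots b_n$ by some bracketing. Then for all $a_1,\dots,a_n\in C$ and all integers $k_1,\dots,k_{n-1}$ and $x_n\in\Bbbk[t,t^{-1}]$, $$t\big(a_1(t^{k_1}),\dots,a_{n-1}(t^{k_{n-1}}),a_n(x_n)\big)=\sum_{s_1,\dots,s_{n-1}\ge0}\prod_{i=1}^{n-1}\binom{k_i}{s_i}\;P^{t^{s_1}\otimes\cdots\otimes t^{s_{n-1}}}_{\,t^{\sum_i(k_i-s_i)}x_n}\big(t^*(a_1,\dots,a_n)\big),$$ where only finitely many terms of the sum are nonzero. (In the paper's notation: $t(\bar a(\bar x))=P^{x_{1(2)}\otimes\cdots\otimes x_{n-1(2)}}_{x_{1(1)}\cdots x_{n-1(1)}x_n}t^*(\bar a)$, using the extended coproduct $\Delta(t^k)=\sum_{s\ge0}\binom ks t^{k-s}\otimes t^s$, $k\in\mathbb Z$.)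
   Context: $\Bbbk$ is a field of characteristic $0$, $H=\Bbbk[D]$ with Hopf structure $\Delta(D)=D\otimes1+1\otimes D$, $\varepsilon(D)=0$, $S(D)=-D$; iterated coproduct $\Delta^{(1)}=\mathrm{id}$, $\Delta^{(k+1)}=(\mathrm{id}\otimes\Delta^{(k)})\Delta$; $H$ acts on $H^{\otimes n}$ from the right by $(f_1\otimes\cdots\otimes f_n)h=f_1h_{(1)}\otimes\cdots\otimes f_nh_{(n)}$ and $H^{\otimes n}\otimes_H M$ is taken w.r.t. this action. A conformal algebra is a unital left $H$-module $C$ with bilinear operations $a_{(n)}b$ ($n\ge0$) such that $a_{(n)}b=0$ for $n\gg0$, $(Da)_{(n)}b=-na_{(n-1)}b$, $a_{(n)}(Db)=D(a_{(n)}b)+na_{(n-1)}b$. Pseudoproduct $a*b=\sum_{s\ge0}\frac{(-D)^s}{s!}\otimes1\otimes_H(a_{(s)}b)$; expanded pseudoproduct: if $a*b=\sum_i f_i\otimes g_i\otimes_H c_i$ then $(F\otimes_H a)*(G\otimes_H b)=\sum_iF\Delta^{(n)}(f_i)\otimes G\Delta^{(m)}(g_i)\otimes_H c_i$. For a bracketing $t$, $t^*(a_1,\dots,a_n)\in H^{\otimes n}\otimes_HC$ is obtained by replacing each product by the expanded pseudoproduct, with $a_i$ regarded as $1\otimes_H a_i$. Coefficient algebra: $\operatorname{Coeff}C=\Bbbk[t,t^{-1}]\otimes_HC$ ($\Bbbk[t,t^{-1}]$ a right $H$-module via $t^nD=-nt^{n-1}$), $a(x):=x\otimes_Ha$, with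 product $a(t^n)b(t^m)=\sum_{s\ge0}\binom ns(a_{(s)}b)(t^{n+m-s})$; $t(\dots)$ on the left is evaluated in $\operatorname{Coeff}C$. Pairing $\langle t^k,D^m\rangle=k!\,\delta_{k,m}$ between $\Bbbk[t]$ and $H$; antipode $S(t)=-t$ on $\Bbbk[t]$. Let $\theta:H^{\otimes n}\otimes_HC\to H^{\otimes(n-1)}\otimes C$ be the isomorphism $(h_1\otimes\cdots\otimes h_{n-1}\otimes1)\otimes_Hc\mapsto h_1\otimes\cdots\otimes h_{n-1}\otimes c$. For $x_i\in\Bbbk[t]$, $P^{x_1\otimes\cdots\otimes x_{n-1}}=(\langle S(x_1),\cdot\rangle\otimes\cdots\otimes\langle S(x_{n-1}),\cdot\rangle\otimes\mathrm{id}_C)\theta:H^{\otimes n}\otimes_HC\to C$, and $P^{\bar x}_y(A):=y\otimes_HP^{\bar x}(A)\in\operatorname{Coeff}C$ for $y\in\Bbbk[t,t^{-1}]$. *)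

theory Defs
  imports Complex_Main "HOL-Library.Function_Algebras"
begin

text \<open>A conformal algebra: a k-vector space C (scalar multiplication sc) with a k-linear
operator D (this is exactly a unital left H-module, H = k[D]), bilinear n-products
pr n a b = a_(n) b, locality and the two sesquilinearity axioms.\<close>

definition conformal_algebra ::
  "('k::field_char_0 \<Rightarrow> 'c::ab_group_add \<Rightarrow> 'c) \<Rightarrow> ('c \<Rightarrow> 'c) \<Rightarrow> (nat \<Rightarrow> 'c \<Rightarrow> 'c \<Rightarrow> 'c) \<Rightarrow> bool" where
  "conformal_algebra sc D pr \<longleftrightarrow>
     vector_space sc \<and> Vector_Spaces.linear sc sc D \<and>
     (\<forall>n a. Vector_Spaces.linear sc sc (pr n a)) \<and>
     (\<forall>n b. Vector_Spaces.linear sc sc (\<lambda>a. pr n a b)) \<and>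
     (\<forall>a b. \<exists>N. \<forall>n\<ge>N. pr n a b = 0) \<and>
     (\<forall>n a b. pr n (D a) b = - sc (of_nat n) (pr (n - 1) a b)) \<and>
     (\<forall>n a b. pr n a (D b) = D (pr n a b) + sc (of_nat n) (pr (n - 1) a b))"

definition loc_bound :: "(nat \<Rightarrow> 'c \<Rightarrow> 'c \<Rightarrow> 'c::zero) \<Rightarrow> 'c \<Rightarrow> 'c \<Rightarrow> nat" where
  "loc_bound pr a b = (LEAST N. \<forall>n\<ge>N. pr n a b = 0)"

datatype bmon = BLeaf | BNode bmon bmon

fun leaves :: "bmon \<Rightarrow> nat" where
  "leaves BLeaf = 1"
| "leaves (BNode l r) = leaves l + leaves r"

text \<open>An element of H^{\<otimes>n} \<otimes>_H C is represented by a list of terms (e, c) with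
length e = n, standing for  D^{e_1} \<otimes> ... \<otimes> D^{e_n} \<otimes>_H c  (scalars absorbed in c).\<close>

text \<open>Pseudoproduct a*b = sum_s (-D)^s/s! \<otimes> 1 \<otimes>_H a_(s) b, as triples (i,j,c)
meaning D^i \<otimes> D^j \<otimes>_H c.\<close>
definition pseudo :: "('k::field_char_0 \<Rightarrow> 'c::ab_group_add \<Rightarrow> 'c) \<Rightarrow> (nat \<Rightarrow> 'c \<Rightarrow> 'c \<Rightarrow> 'c)
    \<Rightarrow> 'c \<Rightarrow> 'c \<Rightarrow> (nat \<times> nat \<times> 'c) list" where
  "pseudo sc pr a b = map (\<lambda>s. (s, 0, sc ((-1)^s / fact s) (pr s a b))) [0..<loc_bound pr a b]"

text \<open>Iterated coproduct on D^s: Delta^(1) = id, Delta^(k+1) = (id \<otimes> Delta^(k)) Delta,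
with Delta(D^s) = sum_j (s choose j) D^j \<otimes> D^(s-j).  Result: list of (coefficient, exponents).
(Delta^(0) is never used.)\<close>
fun delta :: "nat \<Rightarrow> nat \<Rightarrow> ('k::field_char_0 \<times> nat list) list" where
  "delta 0 s = []"
| "delta (Suc 0) s = [(1, [s])]"
| "delta (Suc (Suc k)) s =
     concat (map (\<lambda>j. map (\<lambda>(c, l). (of_nat (s choose j) * c, j # l)) (delta (Suc k) (s - j)))
                 [0..<Suc s])"

definition ep :: "('k::field_char_0 \<Rightarrow> 'c::ab_group_add \<Rightarrow> 'c) \<Rightarrow> (nat \<Rightarrow> 'c \<Rightarrow> 'c \<Rightarrow> 'c)
    \<Rightarrow> (nat list \<times> 'c) list \<Rightarrow> (nat list \<times> 'c) list \<Rightarrow> (nat list \<times> 'c) list" where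
  "ep sc pr A B =
     concat (map (\<lambda>(e, x). concat (map (\<lambda>(e', y). concat (map (\<lambda>(i, j, c).
        concat (map (\<lambda>(c1, l1). map (\<lambda>(c2, l2).
            (map2 (+) e l1 @ map2 (+) e' l2, sc (c1 * c2) c))
          (delta (length e') j)) (delta (length e) i)))
       (pseudo sc pr x y))) B)) A)"

text \<open>t^*(a_1,...,a_n), each a_i regarded as 1 \<otimes>_H a_i.\<close>
fun tstar :: "('k::field_char_0 \<Rightarrow> 'c::ab_group_add \<Rightarrow> 'c) \<Rightarrow> (nat \<Rightarrow> 'c \<Rightarrow> 'c \<Rightarrow> 'c)
    \<Rightarrow> bmon \<Rightarrow> 'c list \<Rightarrow> (nat list \<times> 'c) list" where
  "tstar sc pr BLeaf as = [([0], hd as)]"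
| "tstar sc pr (BNode l r) as =
     ep sc pr (tstar sc pr l (take (leaves l) as)) (tstar sc pr r (drop (leaves l) as))"

text \<open>theta on a single term D^e \<otimes> D^r \<otimes>_H c, computed via the defining relation
(X \<otimes> D^(r+1)) \<otimes>_H c = (X \<otimes> D^r) \<otimes>_H Dc - sum_i (X D_i \<otimes> D^r) \<otimes>_H c;
on terms with r = 0 it is  (h \<otimes> 1) \<otimes>_H c \<mapsto> h \<otimes> c.  Output: terms (e', c) meaning
D^{e'_1} \<otimes> ... \<otimes> D^{e'_{n-1}} \<otimes> c in H^{\<otimes>(n-1)} \<otimes> C.\<close>
fun theta_term :: "('c::ab_group_add \<Rightarrow> 'c) \<Rightarrow> nat list \<Rightarrow> nat \<Rightarrow> 'c \<Rightarrow> (nat list \<times> 'c) list" where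
  "theta_term D e 0 c = [(e, c)]"
| "theta_term D e (Suc r) c =
     theta_term D e r (D c) @ concat (map (\<lambda>i. theta_term D (e[i := e ! i + 1]) r (- c)) [0..<length e])"

definition theta :: "('c::ab_group_add \<Rightarrow> 'c) \<Rightarrow> (nat list \<times> 'c) list \<Rightarrow> (nat list \<times> 'c) list" where
  "theta D A = concat (map (\<lambda>(e, c). theta_term D (butlast e) (last e) c) A)"

text \<open>Pairing <t^k, D^m> = k! delta_{k,m}.\<close>
definition pairing :: "nat \<Rightarrow> nat \<Rightarrow> 'k::field_char_0" where
  "pairing k m = (if k = m then fact k else 0)"

text \<open>P^{t^{s_1} \<otimes> ... \<otimes> t^{s_{n-1}}}, using S(t^s) = (-t)^s = (-1)^s t^s.\<close>
definition Pmon :: "('k::field_char_0 \<Rightarrow> 'c::ab_group_add \<Rightarrow> 'c) \<Rightarrow> ('c \<Rightarrow> 'c) \<Rightarrow> nat list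
    \<Rightarrow> (nat list \<times> 'c) list \<Rightarrow> 'c" where
  "Pmon sc D ss A =
     sum_list (map (\<lambda>(e, c). sc (\<Prod>i<length ss. (-1) ^ (ss ! i) * pairing (ss ! i) (e ! i)) c) (theta D A))"

text \<open>Elements of k[t,t^{-1}] \<otimes> C are represented by lists of (j, c) meaning t^j \<otimes> c;
Laurent polynomials by lists of (coefficient, exponent).\<close>

definition coeff_of :: "('k \<Rightarrow> 'c \<Rightarrow> 'c) \<Rightarrow> ('k \<times> int) list \<Rightarrow> 'c \<Rightarrow> (int \<times> 'c) list" where
  "coeff_of sc x a = map (\<lambda>(c, j). (j, sc c a)) x"   (* a(x) = x \<otimes>_H a *)

definition laurent_shift :: "int \<Rightarrow> ('k \<times> int) list \<Rightarrow> ('k \<times> int) list" where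
  "laurent_shift m x = map (\<lambda>(c, j). (c, j + m)) x"

definition coeff_scale :: "('k \<Rightarrow> 'c \<Rightarrow> 'c) \<Rightarrow> 'k \<Rightarrow> (int \<times> 'c) list \<Rightarrow> (int \<times> 'c) list" where
  "coeff_scale sc r X = map (\<lambda>(j, c). (j, sc r c)) X"

text \<open>P^{xbar}_y(A) = y \<otimes>_H P^{xbar}(A).\<close>
definition Py :: "('k::field_char_0 \<Rightarrow> 'c::ab_group_add \<Rightarrow> 'c) \<Rightarrow> ('c \<Rightarrow> 'c) \<Rightarrow> ('k \<times> int) list
    \<Rightarrow> nat list \<Rightarrow> (nat list \<times> 'c) list \<Rightarrow> (int \<times> 'c) list" where
  "Py sc D y ss A = coeff_of sc y (Pmon sc D ss A)"

text \<open>Product a(t^n) b(t^m) = sum_s (n choose s) (a_(s) b)(t^(n+m-s)), extended bilinearly.\<close>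
definition cmul :: "('k::field_char_0 \<Rightarrow> 'c::ab_group_add \<Rightarrow> 'c) \<Rightarrow> (nat \<Rightarrow> 'c \<Rightarrow> 'c \<Rightarrow> 'c)
    \<Rightarrow> (int \<times> 'c) list \<Rightarrow> (int \<times> 'c) list \<Rightarrow> (int \<times> 'c) list" where
  "cmul sc pr X Y =
     concat (map (\<lambda>(k, a). concat (map (\<lambda>(l, b).
        map (\<lambda>s. (k + l - int s, sc ((of_int k :: 'k) gchoose s) (pr s a b))) [0..<loc_bound pr a b]) Y)) X)"

fun evalC :: "('k::field_char_0 \<Rightarrow> 'c::ab_group_add \<Rightarrow> 'c) \<Rightarrow> (nat \<Rightarrow> 'c \<Rightarrow> 'c \<Rightarrow> 'c)
    \<Rightarrow> bmon \<Rightarrow> (int \<times> 'c) list list \<Rightarrow> (int \<times> 'c) list" where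
  "evalC sc pr BLeaf xs = hd xs"
| "evalC sc pr (BNode l r) xs =
     cmul sc pr (evalC sc pr l (take (leaves l) xs)) (evalC sc pr r (drop (leaves l) xs))"

text \<open>Equality in Coeff C: k[t,t^{-1}] \<otimes> C is identified with finitely supported
functions int \<Rightarrow> C; \<otimes>_H is the quotient by the k-span of the elements
t^j \<otimes> Dc - (t^j D) \<otimes> c = t^j \<otimes> Dc + j t^(j-1) \<otimes> c.\<close>
definition coeff_fun :: "(int \<times> 'c::comm_monoid_add) list \<Rightarrow> int \<Rightarrow> 'c" where
  "coeff_fun X = (\<lambda>j. sum_list (map snd (filter (\<lambda>p. fst p = j) X)))"

definition coeff_rel :: "('k::field_char_0 \<Rightarrow> 'c::ab_group_add \<Rightarrow> 'c) \<Rightarrow> ('c \<Rightarrow> 'c) \<Rightarrow> (int \<Rightarrow> 'c) set" where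
  "coeff_rel sc D = {f. \<exists>k c. f = (\<lambda>j. (if j = k then D c else 0) + (if j = k - 1 then sc (of_int k) c else 0))}"

definition coeff_eq :: "('k::field_char_0 \<Rightarrow> 'c::ab_group_add \<Rightarrow> 'c) \<Rightarrow> ('c \<Rightarrow> 'c)
    \<Rightarrow> (int \<times> 'c) list \<Rightarrow> (int \<times> 'c) list \<Rightarrow> bool" where
  "coeff_eq sc D X Y \<longleftrightarrow>
     (\<lambda>j. coeff_fun X j - coeff_fun Y j) \<in> module.span (\<lambda>r f j. sc r (f j)) (coeff_rel sc D)"

end

theory Submission
  imports Defs "HOL-Computational_Algebra.Formal_Power_Series"
begin



definition single :: "int \<Rightarrow> 'c::zero \<Rightarrow> int \<Rightarrow> 'c" where
  "single k a = (\<lambda>j. if j = k then a else 0)"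

lemma single_add: "single k (a + b) = single k a + (single k b :: int \<Rightarrow> 'c::monoid_add)"
  by (auto simp: single_def fun_eq_iff)

lemma single_zero[simp]: "single k 0 = 0"
  by (auto simp: single_def fun_eq_iff)

lemma single_sum_list: "single k (sum_list (map f L)) = sum_list (map (\<lambda>x. single k (f x)) L)"
  by (induction L) (simp_all add: single_add)

lemma coeff_fun_Nil[simp]: "coeff_fun [] = 0"
  by (simp add: coeff_fun_def fun_eq_iff)

lemma coeff_fun_Cons: "coeff_fun (p # X) = single (fst p) (snd p) + coeff_fun X"
  by (auto simp: coeff_fun_def single_def fun_eq_iff)

lemma coeff_fun_append[simp]: "coeff_fun (X @ Y) = coeff_fun X + coeff_fun Y"
  by (induction X) (simp_all add: coeff_fun_Cons add.assoc)

lemma coeff_fun_concat: "coeff_fun (concat Xs) = sum_list (map coeff_fun Xs)"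
  by (induction Xs) simp_all

lemma coeff_fun_map: "coeff_fun (map f L) = sum_list (map (\<lambda>x. single (fst (f x)) (snd (f x))) L)"
  by (induction L) (simp_all add: coeff_fun_Cons)

lemma coeff_fun_conv: "coeff_fun X = sum_list (map (\<lambda>p. single (fst p) (snd p)) X)"
  by (induction X) (simp_all add: coeff_fun_Cons)

lemma sum_list_swap:
  "(\<Sum>x\<leftarrow>xs. \<Sum>y\<leftarrow>ys. f x y) = (\<Sum>y\<leftarrow>ys. \<Sum>x\<leftarrow>xs. (f x y :: 'a::comm_monoid_add))"
  by (induction xs) (simp_all add: sum_list_addf)

locale ca =
  fixes sc :: "'k::field_char_0 \<Rightarrow> 'c::ab_group_add \<Rightarrow> 'c"
    and D :: "'c \<Rightarrow> 'c"
    and pr :: "nat \<Rightarrow> 'c \<Rightarrow> 'c \<Rightarrow> 'c"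
  assumes ca: "conformal_algebra sc D pr"
begin

sublocale vector_space sc
  using ca unfolding conformal_algebra_def by auto

lemma pr_add_r: "pr n a (b + b') = pr n a b + pr n a b'"
  and pr_scale_r: "pr n a (sc r b) = sc r (pr n a b)"
  and pr_add_l: "pr n (a + a') b = pr n a b + pr n a' b"
  and pr_scale_l: "pr n (sc r a) b = sc r (pr n a b)"
proof -
  have h1: "Vector_Spaces.linear sc sc (pr n a)" and h2: "Vector_Spaces.linear sc sc (\<lambda>a. pr n a b)"
    using ca unfolding conformal_algebra_def by auto
  show "pr n a (b + b') = pr n a b + pr n a b'" "pr n a (sc r b) = sc r (pr n a b)"
    using h1 unfolding Vector_Spaces.linear_iff by auto
  show "pr n (a + a') b = pr n a b + pr n a' b" "pr n (sc r a) b = sc r (pr n a b)"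
    using h2 unfolding Vector_Spaces.linear_iff by auto
qed

lemma pr_zero_r[simp]: "pr n a 0 = 0"
  using pr_scale_r[of n a 0 0] by simp

lemma pr_zero_l[simp]: "pr n 0 b = 0"
  using pr_scale_l[of n 0 0 b] by simp

lemma lb: "loc_bound pr a b \<le> n \<Longrightarrow> pr n a b = 0"
proof -
  obtain N where "\<forall>n\<ge>N. pr n a b = 0" using ca unfolding conformal_algebra_def by blast
  then have "\<forall>n\<ge>loc_bound pr a b. pr n a b = 0"
    unfolding loc_bound_def by (rule LeastI)
  then show "loc_bound pr a b \<le> n \<Longrightarrow> pr n a b = 0" by blast
qed

lemma scale_sum_list: "sc r (sum_list (map f L)) = sum_list (map (\<lambda>x. sc r (f x)) L)"
  by (induction L) (simp_all add: scale_right_distrib)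

lemma sum_list_scale_left: "sum_list (map (\<lambda>x. sc (f x) v) L) = sc (sum_list (map f L)) v"
  by (induction L) (simp_all add: scale_left_distrib)


definition mulS :: "nat \<Rightarrow> int \<Rightarrow> 'c \<Rightarrow> int \<Rightarrow> 'c \<Rightarrow> int \<Rightarrow> 'c" where
  "mulS M k a l b = (\<Sum>s\<leftarrow>[0..<M]. single (k + l - int s) (sc (of_int k gchoose s) (pr s a b)))"

lemma cmul_conv: "coeff_fun (cmul sc pr X Y) =
   (\<Sum>p\<leftarrow>X. \<Sum>q\<leftarrow>Y. mulS (loc_bound pr (snd p) (snd q)) (fst p) (snd p) (fst q) (snd q))"
  unfolding cmul_def mulS_def
  by (simp add: split_def comp_def coeff_fun_concat coeff_fun_map)

lemma mulS_bound:
  assumes "\<forall>s\<ge>N. pr s a b = 0" "N \<le> M"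
  shows "mulS N k a l b = mulS M k a l b"
proof -
  have "[0..<M] = [0..<N] @ [N..<M]" using assms(2) upt_add_eq_append[of 0 N "M - N"] by simp
  moreover have "(\<Sum>s\<leftarrow>[N..<M]. single (k + l - int s) (sc (of_int k gchoose s) (pr s a b))) = 0"
  proof -
    have "map (\<lambda>s. single (k + l - int s) (sc (of_int k gchoose s) (pr s a b))) [N..<M] = map (\<lambda>s. 0) [N..<M]"
      using assms(1) by (intro map_cong) auto
    then show ?thesis by (simp only: sum_list_0)
  qed
  ultimately show ?thesis unfolding mulS_def by simp
qed

lemma mulS_lb: "loc_bound pr a b \<le> M \<Longrightarrow> mulS (loc_bound pr a b) k a l b = mulS M k a l b"
  by (rule mulS_bound) (auto intro: lb)

lemma mulS_add_l: "mulS M k (a + a') l b = mulS M k a l b + mulS M k a' l b"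
  and mulS_add_r: "mulS M k a l (b + b') = mulS M k a l b + mulS M k a l b'"
  and mulS_zero_l: "mulS M k 0 l b = 0"
  and mulS_zero_r: "mulS M k a l 0 = 0"
  unfolding mulS_def
  by (simp_all add: pr_add_l pr_add_r scale_right_distrib single_add sum_list_addf)

end

lemma group_sum:
  fixes h :: "int \<Rightarrow> 'c::ab_group_add \<Rightarrow> 'd::comm_monoid_add"
  assumes add: "\<And>k a b. h k (a + b) = h k a + h k b" and zero: "\<And>k. h k 0 = 0"
    and S: "finite S" "fst ` set X \<subseteq> S"
  shows "(\<Sum>p\<leftarrow>X. h (fst p) (snd p)) = (\<Sum>k\<in>S. h k (coeff_fun X k))"
  using S(2)
proof (induction X)
  case Nil
  then show ?case by (simp add: zero)
next
  case (Cons p X)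
  have k: "fst p \<in> S" using Cons.prems by auto
  have "(\<Sum>k\<in>S. h k (coeff_fun (p # X) k)) = (\<Sum>k\<in>S. h k (single (fst p) (snd p) k) + h k (coeff_fun X k))"
    by (simp add: coeff_fun_Cons add)
  also have "\<dots> = (\<Sum>k\<in>S. h k (single (fst p) (snd p) k)) + (\<Sum>k\<in>S. h k (coeff_fun X k))"
    by (simp add: sum.distrib)
  also have "(\<Sum>k\<in>S. h k (single (fst p) (snd p) k)) = h (fst p) (snd p)"
    using k S(1) by (simp add: single_def zero if_distrib sum.delta cong: if_cong)
  finally show ?case using Cons by simp
qed

context ca begin

definition LB :: "(int \<times> 'c) list \<Rightarrow> (int \<times> 'c) list \<Rightarrow> nat" where
  "LB X Y = (\<Sum>p\<leftarrow>X. \<Sum>q\<leftarrow>Y. loc_bound pr (snd p) (snd q))"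

lemma LB_le: "p \<in> set X \<Longrightarrow> q \<in> set Y \<Longrightarrow> loc_bound pr (snd p) (snd q) \<le> LB X Y"
proof -
  assume a: "p \<in> set X" "q \<in> set Y"
  have "loc_bound pr (snd p) (snd q) \<le> (\<Sum>q\<leftarrow>Y. loc_bound pr (snd p) (snd q))"
    by (rule member_le_sum_list) (use a in auto)
  also have "\<dots> \<le> LB X Y" unfolding LB_def
    by (rule member_le_sum_list) (use a in auto)
  finally show ?thesis .
qed

lemma cmul_group:
  assumes M: "\<And>p q. p \<in> set X \<Longrightarrow> q \<in> set Y \<Longrightarrow> loc_bound pr (snd p) (snd q) \<le> M"
    and S: "finite S" "fst ` set X \<subseteq> S" and T: "finite T" "fst ` set Y \<subseteq> T"
  shows "coeff_fun (cmul sc pr X Y) = (\<Sum>k\<in>S. \<Sum>l\<in>T. mulS M k (coeff_fun X k) l (coeff_fun Y l))"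
proof -
  have "coeff_fun (cmul sc pr X Y) = (\<Sum>p\<leftarrow>X. \<Sum>q\<leftarrow>Y. mulS M (fst p) (snd p) (fst q) (snd q))"
    unfolding cmul_conv using M
    by (intro arg_cong[where f=sum_list] map_cong refl) (simp add: mulS_lb)
  also have "\<dots> = (\<Sum>p\<leftarrow>X. \<Sum>l\<in>T. mulS M (fst p) (snd p) l (coeff_fun Y l))"
    by (intro arg_cong[where f=sum_list] map_cong refl group_sum T)
       (simp_all add: mulS_add_r mulS_zero_r fun_eq_iff)
  also have "\<dots> = (\<Sum>k\<in>S. \<Sum>l\<in>T. mulS M k (coeff_fun X k) l (coeff_fun Y l))"
    by (rule group_sum[where h="\<lambda>k a. \<Sum>l\<in>T. mulS M k a l (coeff_fun Y l)", OF _ _ S])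
       (simp_all add: mulS_add_l mulS_zero_l sum.distrib fun_eq_iff)
  finally show ?thesis .
qed

lemma cmul_resp:
  assumes "coeff_fun X = coeff_fun X'" "coeff_fun Y = coeff_fun Y'"
  shows "coeff_fun (cmul sc pr X Y) = coeff_fun (cmul sc pr X' Y')"
proof -
  define M where "M = LB X Y + LB X' Y'"
  define S where "S = fst ` set X \<union> fst ` set X'"
  define T where "T = fst ` set Y \<union> fst ` set Y'"
  have "coeff_fun (cmul sc pr X Y) = (\<Sum>k\<in>S. \<Sum>l\<in>T. mulS M k (coeff_fun X k) l (coeff_fun Y l))"
    by (rule cmul_group) (auto simp: S_def T_def M_def intro: trans_le_add1 LB_le)
  moreover have "coeff_fun (cmul sc pr X' Y') = (\<Sum>k\<in>S. \<Sum>l\<in>T. mulS M k (coeff_fun X' k) l (coeff_fun Y' l))"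
    by (rule cmul_group) (auto simp: S_def T_def M_def intro: trans_le_add2 LB_le)
  ultimately show ?thesis using assms by simp
qed

end


lemma sum_list_concat: "sum_list (concat xss) = sum_list (map sum_list (xss :: 'a::monoid_add list list))"
  by (induction xss) simp_all

definition ff :: "'k::field_char_0 \<Rightarrow> nat \<Rightarrow> 'k" where
  "ff x d = (x gchoose d) * fact d"

lemma ff_vdm:
  fixes x y :: "'k::field_char_0"
  shows "(\<Sum>j=0..s. of_nat (s choose j) * ff x j * ff y (s - j)) = ff (x + y) s"
proof -
  have "ff (x + y) s = fact s * (\<Sum>j=0..s. (x gchoose j) * (y gchoose (s - j)))"
    unfolding ff_def gbinomial_Vandermonde by simp
  also have "\<dots> = (\<Sum>j=0..s. of_nat (s choose j) * ff x j * ff y (s - j))"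
    unfolding sum_distrib_left
  proof (intro sum.cong refl)
    fix j assume "j \<in> {0..s}"
    then have "fact j * fact (s - j) * (s choose j) = fact s"
      by (intro binomial_fact_lemma) auto
    then have "(fact s :: 'k) = fact j * fact (s - j) * of_nat (s choose j)"
      by (metis of_nat_fact of_nat_mult)
    then show "fact s * ((x gchoose j) * (y gchoose (s - j))) = of_nat (s choose j) * ff x j * ff y (s - j)"
      unfolding ff_def by (simp add: algebra_simps)
  qed
  finally show ?thesis by simp
qed

lemma delta_props:
  "m \<ge> 1 \<Longrightarrow> p \<in> set (delta m s :: ('k::field_char_0 \<times> nat list) list) \<Longrightarrow> length (snd p) = m \<and> sum_list (snd p) = s"
proof (induction m s arbitrary: p rule: delta.induct)
  case (3 k s)
  then show ?case by fastforce
qed auto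

lemma delta_zero: "m \<ge> 1 \<Longrightarrow> (delta m 0 :: ('k::field_char_0 \<times> nat list) list) = [(1, replicate m 0)]"
proof (induction m "0::nat" rule: delta.induct)
  case (3 k)
  then show ?case by simp
qed auto

lemma delta_ff:
  fixes a :: "nat \<Rightarrow> 'k::field_char_0"
  shows "m \<ge> 1 \<Longrightarrow> (\<Sum>p\<leftarrow>delta m s. fst p * (\<Prod>i<m. ff (a i) (snd p ! i))) = ff (\<Sum>i<m. a i) s"
proof (induction m s arbitrary: a rule: delta.induct)
  case (2 s)
  then show ?case by simp
next
  case (3 k s)
  have "(\<Sum>p\<leftarrow>delta (Suc (Suc k)) s. fst p * (\<Prod>i<Suc (Suc k). ff (a i) (snd p ! i)))
      = (\<Sum>j\<leftarrow>[0..<Suc s]. \<Sum>p\<leftarrow>delta (Suc k) (s - j).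
           of_nat (s choose j) * fst p * (ff (a 0) j * (\<Prod>i<Suc k. ff (a (Suc i)) (snd p ! i))))"
    by (simp add: sum_list_concat map_concat comp_def split_def prod.lessThan_Suc_shift del: upt_Suc prod.lessThan_Suc)
  also have "\<dots> = (\<Sum>j\<leftarrow>[0..<Suc s]. of_nat (s choose j) * ff (a 0) j *
           (\<Sum>p\<leftarrow>delta (Suc k) (s - j). fst p * (\<Prod>i<Suc k. ff (a (Suc i)) (snd p ! i))))"
    by (simp add: sum_list_const_mult[symmetric] algebra_simps del: upt_Suc)
  also have "\<dots> = (\<Sum>j\<leftarrow>[0..<Suc s]. of_nat (s choose j) * ff (a 0) j * ff (\<Sum>i<Suc k. a (Suc i)) (s - j))"
    by (intro arg_cong[where f=sum_list] map_cong refl arg_cong2[where f="(*)"] "3.IH")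
       (simp_all del: upt_Suc)
  also have "\<dots> = ff (a 0 + (\<Sum>i<Suc k. a (Suc i))) s"
    by (subst ff_vdm[symmetric]) (simp add: sum_list_distinct_conv_sum_set atLeastLessThanSuc_atLeastAtMost del: upt_Suc)
  also have "a 0 + (\<Sum>i<Suc k. a (Suc i)) = (\<Sum>i<Suc (Suc k). a i)"
    by (simp only: sum.lessThan_Suc_shift)
  finally show ?case .
qed auto



definition ffs :: "int \<Rightarrow> nat \<Rightarrow> 'k::field_char_0" where
  "ffs k e = (of_int k gchoose e) * (-1) ^ e * fact e"

lemma ffs_0[simp]: "ffs k 0 = 1"
  by (simp add: ffs_def)

lemma ffs_add: "ffs k (e + d) = (ffs k e :: 'k::field_char_0) * (-1) ^ d * ff (of_int k - of_nat e) d"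
proof -
  define a :: 'k where "a = of_int k"
  have t: "(a gchoose (e + d)) * (of_nat (e + d) gchoose e) = (a gchoose e) * ((a - of_nat e) gchoose (e + d - e))"
    by (rule gbinomial_trinomial_revision) simp
  have c: "(of_nat (e + d) gchoose e :: 'k) = of_nat ((e + d) choose e)"
    by (simp add: binomial_gbinomial)
  have f: "fact e * fact d * ((e + d) choose e) = fact (e + d)"
    using binomial_fact_lemma[of e "e + d"] by simp
  have f': "(fact (e + d) :: 'k) = fact e * fact d * of_nat ((e + d) choose e)"
    by (metis f of_nat_fact of_nat_mult)
  have nz: "(of_nat ((e + d) choose e) :: 'k) \<noteq> 0" by simp
  have "(a gchoose (e + d)) * fact (e + d) = (a gchoose e) * fact e * (((a - of_nat e) gchoose d) * fact d)"
  proof -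
    have "(a gchoose (e + d)) * fact (e + d) = (a gchoose (e + d)) * of_nat ((e + d) choose e) * fact e * fact d"
      using f' by (simp add: algebra_simps)
    also have "\<dots> = (a gchoose e) * ((a - of_nat e) gchoose d) * fact e * fact d"
      using t c by simp
    finally show ?thesis by (simp add: algebra_simps)
  qed
  then show ?thesis
    unfolding ffs_def ff_def a_def[symmetric] by (simp add: power_add algebra_simps)
qed

lemma sum_lessThan_add: "(\<Sum>i<a + (b::nat). f i) = (\<Sum>i<a. f i) + (\<Sum>i<b. f (a + i))"
  by (induction b) (simp_all add: add.assoc)

lemma prod_lessThan_add: "(\<Prod>i<a + (b::nat). f i) = (\<Prod>i<a. f i) * (\<Prod>i<b. f (a + i))"
  by (induction b) (simp_all add: mult.assoc)

lemma coef:
  fixes ks :: "int list" and e e' :: "nat list"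
  assumes "length e = nl" "nl \<ge> 1" "e ! (nl - 1) = 0" "length e' = nr" "nr \<ge> 1" "length ks = nl + nr - 1"
  shows "(\<Sum>p\<leftarrow>delta nl s. (\<Prod>i<length ks. ffs (ks ! i) ((map2 (+) e (snd p) @ e') ! i)) * fst p)
     = ((-1) ^ s * ff (of_int (ks ! (nl - 1) + (\<Sum>i<nl - 1. ks ! i - int (e ! i)))) s
        * (\<Prod>i<nl - 1. ffs (ks ! i) (e ! i)) * (\<Prod>i<nr - 1. ffs (ks ! (nl + i)) (e' ! i)) :: 'k::field_char_0)"
proof -
  define \<alpha> :: 'k where "\<alpha> = (\<Prod>i<nl - 1. ffs (ks ! i) (e ! i))"
  define \<beta> :: 'k where "\<beta> = (\<Prod>i<nr - 1. ffs (ks ! (nl + i)) (e' ! i))"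
  define a :: "nat \<Rightarrow> 'k" where "a i = of_int (ks ! i) - of_nat (e ! i)" for i
  have lk: "length ks = nl + (nr - 1)" using assms by simp
  have alpha: "(\<Prod>i<nl. ffs (ks ! i) (e ! i)) = \<alpha>"
  proof -
    have "nl = Suc (nl - 1)" using assms by simp
    then have "(\<Prod>i<nl. ffs (ks ! i) (e ! i)) = (\<Prod>i<nl - 1. ffs (ks ! i) (e ! i)) * ffs (ks ! (nl - 1)) (e ! (nl - 1))"
      by (metis prod.lessThan_Suc)
    then show ?thesis using assms(3) by (simp add: \<alpha>_def)
  qed
  have suma: "(\<Sum>i<nl. a i) = of_int (ks ! (nl - 1) + (\<Sum>i<nl - 1. ks ! i - int (e ! i)))"
  proof -
    have "nl = Suc (nl - 1)" using assms by simp
    then have "(\<Sum>i<nl. a i) = (\<Sum>i<nl - 1. a i) + a (nl - 1)"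
      by (metis sum.lessThan_Suc)
    then show ?thesis using assms(3) by (simp add: a_def)
  qed
  have trm: "(\<Prod>i<length ks. ffs (ks ! i) ((map2 (+) e l @ e') ! i)) * c
      = (-1) ^ s * \<alpha> * \<beta> * (c * (\<Prod>i<nl. ff (a i) (l ! i)))"
    if "(c, l) \<in> set (delta nl s)" for c l
  proof -
    have l: "length l = nl" "sum_list l = s" using delta_props[OF assms(2) that] by auto
    have "(\<Prod>i<length ks. ffs (ks ! i) ((map2 (+) e l @ e') ! i))
        = (\<Prod>i<nl. ffs (ks ! i) ((map2 (+) e l @ e') ! i)) * (\<Prod>i<nr - 1. ffs (ks ! (nl + i)) ((map2 (+) e l @ e') ! (nl + i)))"
      unfolding lk prod_lessThan_add ..
    also have "(\<Prod>i<nr - 1. ffs (ks ! (nl + i)) ((map2 (+) e l @ e') ! (nl + i))) = \<beta>"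
      unfolding \<beta>_def using l assms by (intro prod.cong refl) (simp add: nth_append)
    also have "(\<Prod>i<nl. ffs (ks ! i) ((map2 (+) e l @ e') ! i)) = (\<Prod>i<nl. ffs (ks ! i) (e ! i) * (-1) ^ (l ! i) * ff (a i) (l ! i))"
      using l assms by (intro prod.cong refl) (simp add: nth_append ffs_add a_def)
    also have "\<dots> = \<alpha> * (\<Prod>i<nl. (-1) ^ (l ! i)) * (\<Prod>i<nl. ff (a i) (l ! i))"
      by (simp add: prod.distrib alpha)
    also have "(\<Prod>i<nl. (-1::'k) ^ (l ! i)) = (-1) ^ s"
      using l by (simp add: power_sum[symmetric] sum_list_sum_nth atLeast0LessThan)
    finally show ?thesis by (simp add: algebra_simps)
  qed
  have "(\<Sum>p\<leftarrow>delta nl s. (\<Prod>i<length ks. ffs (ks ! i) ((map2 (+) e (snd p) @ e') ! i)) * fst p)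
      = (\<Sum>p\<leftarrow>delta nl s. (-1) ^ s * \<alpha> * \<beta> * (fst p * (\<Prod>i<nl. ff (a i) (snd p ! i))))"
    using trm by (intro arg_cong[where f=sum_list] map_cong refl) (metis prod.collapse)
  also have "\<dots> = (-1) ^ s * \<alpha> * \<beta> * ff (\<Sum>i<nl. a i) s"
    by (simp add: sum_list_const_mult delta_ff[OF assms(2)])
  finally show ?thesis unfolding suma \<alpha>_def \<beta>_def by (simp add: algebra_simps)
qed




lemma map2_replicate0: "map2 (+) e (replicate (length e) (0::nat)) = e"
  by (induction e) simp_all

lemma map2_replicate0': "map (\<lambda>p. fst p + snd p) (zip e (replicate (length e) (0::nat))) = e"
  by (induction e) simp_all

lemma ep_single:
  assumes "length e' \<ge> 1"
  shows "ep sc pr [(e, x)] [(e', y)] = concat (map (\<lambda>s. map (\<lambda>p. (map2 (+) e (snd p) @ e',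
            sc (fst p) (sc ((-1) ^ s / fact s) (pr s x y)))) (delta (length e) s)) [0..<loc_bound pr x y])"
  using assms unfolding ep_def pseudo_def
  by (simp add: delta_zero map2_replicate0' comp_def split_def)

context ca begin

definition Phi :: "int list \<Rightarrow> ('k \<times> int) list \<Rightarrow> (nat list \<times> 'c) list \<Rightarrow> (int \<times> 'c) list" where
  "Phi ks x A = concat (map (\<lambda>(e, c). map (\<lambda>(g, j0). (j0 + (\<Sum>i<length ks. ks ! i - int (e ! i)),
       sc (g * (\<Prod>i<length ks. ffs (ks ! i) (e ! i))) c)) x) A)"

lemma Phi_concat: "Phi ks x (concat As) = concat (map (Phi ks x) As)"
  by (induction As) (simp_all add: Phi_def)

lemma coeff_Phi_concat: "coeff_fun (Phi ks x (concat As)) = (\<Sum>A\<leftarrow>As. coeff_fun (Phi ks x A))"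
  unfolding Phi_concat coeff_fun_concat by (simp add: comp_def)

lemma coeff_Phi_map: "coeff_fun (Phi ks x (map f L)) = (\<Sum>p\<leftarrow>L. \<Sum>q\<leftarrow>x.
    single (snd q + (\<Sum>i<length ks. ks ! i - int (fst (f p) ! i)))
      (sc (fst q * (\<Prod>i<length ks. ffs (ks ! i) (fst (f p) ! i))) (snd (f p))))"
  unfolding Phi_def coeff_fun_concat coeff_fun_map
  by (simp add: comp_def split_def coeff_fun_map)

lemma pair:
  assumes "length e = nl" "nl \<ge> 1" "e ! (nl - 1) = 0" "length e' = nr" "nr \<ge> 1" "length ks = nl + nr - 1"
  defines "P \<equiv> ks ! (nl - 1) + (\<Sum>i<nl - 1. ks ! i - int (e ! i))"
    and "Q \<equiv> (\<Sum>i<nr - 1. ks ! (nl + i) - int (e' ! i))"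
    and "\<alpha> \<equiv> (\<Prod>i<nl - 1. ffs (ks ! i) (e ! i))"
    and "\<beta> \<equiv> (\<Prod>i<nr - 1. ffs (ks ! (nl + i)) (e' ! i))"
  shows "coeff_fun (Phi ks xn (ep sc pr [(e, x)] [(e', y)])) =
     (\<Sum>q\<leftarrow>xn. mulS (loc_bound pr x y) P (sc \<alpha> x) (snd q + Q) (sc (fst q * \<beta>) y))"
proof -
  define L where "L = loc_bound pr x y"
  define E where "E l = map2 (+) e l @ e'" for l
  define v where "v s = pr s x y" for s
  have expo: "(\<Sum>i<length ks. ks ! i - int (E l ! i)) = P + Q - int s"
    if "(c, l) \<in> set (delta nl s)" for c l s
  proof -
    have l: "length l = nl" "sum_list l = s" using delta_props[OF assms(2) that] by auto
    have lk: "length ks = nl + (nr - 1)" using assms by simp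
    have "(\<Sum>i<length ks. ks ! i - int (E l ! i))
        = (\<Sum>i<nl. ks ! i - int (e ! i) - int (l ! i)) + Q"
      unfolding lk sum_lessThan_add Q_def
    proof (intro arg_cong2[where f="(+)"] sum.cong refl)
      fix i assume "i \<in> {..<nl}"
      then show "ks ! i - int (E l ! i) = ks ! i - int (e ! i) - int (l ! i)"
        using l assms(1) by (simp add: E_def nth_append)
    next
      fix i assume "i \<in> {..<nr - 1}"
      then show "ks ! (nl + i) - int (E l ! (nl + i)) = ks ! (nl + i) - int (e' ! i)"
        using l assms(1) by (simp add: E_def nth_append)
    qed
    also have "(\<Sum>i<nl. ks ! i - int (e ! i) - int (l ! i)) = (\<Sum>i<nl. ks ! i - int (e ! i)) - int s"
    proof -
      have "(\<Sum>i<nl. int (l ! i)) = int s"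
      proof -
        have "int (\<Sum>i<nl. l ! i) = int s"
          using l sum_list_sum_nth[of l] by (simp add: atLeast0LessThan)
        then show ?thesis by (simp only: of_nat_sum)
      qed
      then show ?thesis by (simp only: sum_subtractf)
    qed
    also have "(\<Sum>i<nl. ks ! i - int (e ! i)) = P"
    proof -
      have nl: "Suc (nl - 1) = nl" using assms(2) by simp
      have "(\<Sum>i<Suc (nl - 1). ks ! i - int (e ! i)) = (\<Sum>i<nl - 1. ks ! i - int (e ! i)) + (ks ! (nl - 1) - int (e ! (nl - 1)))"
        by (rule sum.lessThan_Suc)
      then have "(\<Sum>i<nl. ks ! i - int (e ! i)) = (\<Sum>i<nl - 1. ks ! i - int (e ! i)) + (ks ! (nl - 1) - int (e ! (nl - 1)))"
        by (simp only: nl)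
      then show ?thesis using assms(3) by (simp add: P_def)
    qed
    finally show ?thesis by simp
  qed
  have "coeff_fun (Phi ks xn (ep sc pr [(e, x)] [(e', y)])) =
      (\<Sum>s\<leftarrow>[0..<L]. \<Sum>p\<leftarrow>delta nl s. \<Sum>q\<leftarrow>xn.
         single (snd q + (\<Sum>i<length ks. ks ! i - int (E (snd p) ! i)))
           (sc (fst q * (\<Prod>i<length ks. ffs (ks ! i) (E (snd p) ! i))) (sc (fst p) (sc ((-1) ^ s / fact s) (v s)))))"
    unfolding ep_single[OF assms(5)[folded assms(4)]]
    by (simp only: coeff_Phi_concat coeff_Phi_map map_map comp_def E_def L_def v_def assms(1) fst_conv snd_conv)
  also have "\<dots> = (\<Sum>s\<leftarrow>[0..<L]. \<Sum>q\<leftarrow>xn. \<Sum>p\<leftarrow>delta nl s.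
         single (snd q + (P + Q - int s))
           (sc (fst q * ((-1) ^ s / fact s) * ((\<Prod>i<length ks. ffs (ks ! i) (E (snd p) ! i)) * fst p)) (v s)))"
    apply (rule arg_cong[where f=sum_list], rule map_cong[OF refl])
    apply (subst sum_list_swap)
    apply (rule arg_cong[where f=sum_list], rule map_cong[OF refl])
    apply (rule arg_cong[where f=sum_list], rule map_cong[OF refl])
    subgoal for s q p
      using expo[of "fst p" "snd p" s] by (simp add: mult_ac)
    done
  also have "\<dots> = (\<Sum>s\<leftarrow>[0..<L]. \<Sum>q\<leftarrow>xn. single (snd q + (P + Q - int s))
           (sc (fst q * ((-1) ^ s / fact s) * ((-1) ^ s * ff (of_int P) s * \<alpha> * \<beta>)) (v s)))"
    apply (rule arg_cong[where f=sum_list], rule map_cong[OF refl])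
    apply (rule arg_cong[where f=sum_list], rule map_cong[OF refl])
    apply (subst single_sum_list[symmetric])
    apply (subst sum_list_scale_left)
    apply (subst sum_list_const_mult)
    apply (subst coef[OF assms(1-6), unfolded E_def[symmetric]])
    by (simp add: P_def \<alpha>_def \<beta>_def)
  also have "\<dots> = (\<Sum>q\<leftarrow>xn. \<Sum>s\<leftarrow>[0..<L]. single (P + (snd q + Q) - int s)
           (sc (of_int P gchoose s) (pr s (sc \<alpha> x) (sc (fst q * \<beta>) y))))"
    apply (subst sum_list_swap)
    apply (rule arg_cong[where f=sum_list], rule map_cong[OF refl])
    apply (rule arg_cong[where f=sum_list], rule map_cong[OF refl])
    by (simp add: pr_scale_l pr_scale_r v_def ff_def algebra_simps)
  finally show ?thesis unfolding mulS_def L_def .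
qed

end



lemma leaves_pos: "leaves t \<ge> 1"
  by (induction t) auto

lemma ep_split: "ep sc pr A B = concat (map (\<lambda>a. concat (map (\<lambda>b. ep sc pr [a] [b]) B)) A)"
  unfolding ep_def by (simp add: split_def)

lemma ep_mem:
  fixes sc :: "'k::field_char_0 \<Rightarrow> 'c::ab_group_add \<Rightarrow> 'c"
  assumes "p \<in> set (ep sc pr A B)" "\<forall>b\<in>set B. length (fst b) \<ge> 1"
  obtains a b s c l where "a \<in> set A" "b \<in> set B" "(c, l) \<in> set (delta (length (fst a)) s :: ('k \<times> nat list) list)"
    "fst p = map2 (+) (fst a) l @ fst b"
proof -
  from assms(1) obtain a b where ab: "a \<in> set A" "b \<in> set B" "p \<in> set (ep sc pr [a] [b])"
    by (subst (asm) ep_split) auto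
  obtain e x e' y where a: "a = (e, x)" and b: "b = (e', y)" by (cases a, cases b)
  have le: "length e' \<ge> 1" using assms(2) ab b by auto
  have "\<exists>s q. q \<in> set (delta (length e) s :: ('k \<times> nat list) list) \<and> fst p = map2 (+) e (snd q) @ e'"
  proof -
    from ab(3)[unfolded a b ep_single[OF le] set_concat set_map]
    obtain s where "p \<in> set (map (\<lambda>p. (map2 (+) e (snd p) @ e',
            sc (fst p) (sc ((-1) ^ s / fact s) (pr s x y)))) (delta (length e) s))"
      by blast
    then obtain q where "q \<in> set (delta (length e) s)" "p = (map2 (+) e (snd q) @ e',
            sc (fst q) (sc ((-1) ^ s / fact s) (pr s x y)))"
      by auto
    then have "q \<in> set (delta (length e) s) \<and> fst p = map2 (+) e (snd q) @ e'" by simp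
    then show ?thesis by blast
  qed
  then obtain s q where
    q: "q \<in> set (delta (length e) s :: ('k \<times> nat list) list)" "fst p = map2 (+) e (snd q) @ e'"
    by blast
  then show ?thesis using that[of a b "fst q" "snd q" s] ab a b by simp
qed

lemma tstar_inv:
  fixes sc :: "'k::field_char_0 \<Rightarrow> 'c::ab_group_add \<Rightarrow> 'c"
  shows   "p \<in> set (tstar sc pr t as) \<Longrightarrow> length (fst p) = leaves t \<and> fst p ! (leaves t - 1) = 0"
proof (induction t arbitrary: as p)
  case BLeaf
  then show ?case by simp
next
  case (BNode l r)
  have B: "\<forall>b\<in>set (tstar sc pr r (drop (leaves l) as)). length (fst b) \<ge> 1"
    using BNode.IH(2) leaves_pos by (metis)
  obtain a b s c v where ab: "a \<in> set (tstar sc pr l (take (leaves l) as))"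
    "b \<in> set (tstar sc pr r (drop (leaves l) as))" "(c, v) \<in> set (delta (length (fst a)) s :: ('k \<times> nat list) list)"
    "fst p = map2 (+) (fst a) v @ fst b"
    by (rule ep_mem[OF BNode.prems[unfolded tstar.simps] B])
  have la: "length (fst a) = leaves l" using BNode.IH(1)[OF ab(1)] by simp
  have lb: "length (fst b) = leaves r" "fst b ! (leaves r - 1) = 0" using BNode.IH(2)[OF ab(2)] by auto
  have lv: "length v = leaves l" using delta_props[OF _ ab(3)] la leaves_pos by auto
  have "leaves l + leaves r - 1 = leaves l + (leaves r - 1)" using leaves_pos[of r] by simp
  then show ?case using ab(4) la lb lv by (simp add: nth_append)
qed




lemma sum_take: "m \<le> length ks \<Longrightarrow> (\<Sum>i<length (take m ks). f (take m ks ! i) i) = (\<Sum>i<m. f (ks ! i) i)"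
  by (intro sum.cong) (auto simp: min_def)

lemma prod_take: "m \<le> length ks \<Longrightarrow> (\<Prod>i<length (take m ks). f (take m ks ! i) i) = (\<Prod>i<m. f (ks ! i) i)"
  by (intro prod.cong) (auto simp: min_def)

lemma sum_drop: "(\<Sum>i<length (drop m ks). f (drop m ks ! i) i) = (\<Sum>i<length ks - m. f (ks ! (m + i)) i)"
  by (intro sum.cong) auto

lemma prod_drop: "(\<Prod>i<length (drop m ks). f (drop m ks ! i) i) = (\<Prod>i<length ks - m. f (ks ! (m + i)) i)"
  by (intro prod.cong) auto

lemma sum_list_map_concat: "sum_list (map f (concat xss)) = sum_list (map (\<lambda>xs. sum_list (map f xs)) xss)"
  by (induction xss) simp_all

context ca begin

lemma mulS_scaled_lb:
  "mulS (loc_bound pr (sc \<alpha> x) (sc \<beta> y)) k (sc \<alpha> x) l (sc \<beta> y) = mulS (loc_bound pr x y) k (sc \<alpha> x) l (sc \<beta> y)"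
proof -
  define M where "M = loc_bound pr (sc \<alpha> x) (sc \<beta> y) + loc_bound pr x y"
  have "mulS (loc_bound pr (sc \<alpha> x) (sc \<beta> y)) k (sc \<alpha> x) l (sc \<beta> y) = mulS M k (sc \<alpha> x) l (sc \<beta> y)"
    by (rule mulS_bound) (auto simp: M_def intro: lb)
  moreover have "mulS (loc_bound pr x y) k (sc \<alpha> x) l (sc \<beta> y) = mulS M k (sc \<alpha> x) l (sc \<beta> y)"
    by (rule mulS_bound) (auto simp: M_def pr_scale_l pr_scale_r lb)
  ultimately show ?thesis by simp
qed

lemma xs_facts:
  fixes xn :: "('k \<times> int) list"
  assumes "length ks = length as - 1" "length as \<ge> 1"
  defines "xs \<equiv> map2 (\<lambda>k a. [(k, a)]) ks (butlast as) @ [coeff_of sc xn (last as)]"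
  shows "length xs = length as" "\<And>i. i < length as - 1 \<Longrightarrow> xs ! i = [(ks ! i, as ! i)]"
    "xs ! (length as - 1) = coeff_of sc xn (last as)"
  using assms by (auto simp: nth_append nth_butlast)

lemma coeff_Phi_ep: "coeff_fun (Phi ks xn (ep sc pr A B)) = (\<Sum>a\<leftarrow>A. \<Sum>b\<leftarrow>B. coeff_fun (Phi ks xn (ep sc pr [a] [b])))"
  by (subst ep_split) (simp add: coeff_Phi_concat comp_def)

lemma main:
  "length as = leaves t \<Longrightarrow> length ks = leaves t - 1 \<Longrightarrow>
   coeff_fun (evalC sc pr t (map2 (\<lambda>k a. [(k, a)]) ks (butlast as) @ [coeff_of sc xn (last as)]))
   = coeff_fun (Phi ks xn (tstar sc pr t as))"
proof (induction t arbitrary: as ks xn)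
  case BLeaf
  then obtain a where "as = [a]" by (cases as) auto
  moreover have "ks = []" using BLeaf by simp
  ultimately show ?case
    by (simp add: coeff_of_def Phi_def split_def comp_def)
next
  case (BNode l r)
  define nl where "nl = leaves l"
  define nr where "nr = leaves r"
  have nl1: "nl \<ge> 1" and nr1: "nr \<ge> 1" unfolding nl_def nr_def by (rule leaves_pos)+
  have las: "length as = nl + nr" and lks: "length ks = nl + nr - 1"
    using BNode.prems by (simp_all add: nl_def nr_def)
  define xs where "xs = map2 (\<lambda>k a. [(k, a)]) ks (butlast as) @ [coeff_of sc xn (last as)]"
  have c1: "length ks = length as - 1" "length as \<ge> 1" using las lks nl1 by auto
  note X = xs_facts[where xn=xn and ks=ks and as=as, OF c1, folded xs_def]
  define ksl where "ksl = take (nl - 1) ks"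
  define ksr where "ksr = drop nl ks"
  define asl where "asl = take nl as"
  define asr where "asr = drop nl as"
  define k where "k = ks ! (nl - 1)"
  have tk: "take nl xs = map2 (\<lambda>k a. [(k, a)]) ksl (butlast asl) @ [coeff_of sc [(1, k)] (last asl)]"
  proof (rule nth_equalityI)
    show "length (take nl xs) = length (map2 (\<lambda>k a. [(k, a)]) ksl (butlast asl) @ [coeff_of sc [(1, k)] (last asl)])"
      using X las lks nl1 nr1 by (simp add: ksl_def asl_def)
  next
    fix i assume "i < length (take nl xs)"
    then have i: "i < nl" using X las lks nl1 nr1 by simp
    show "take nl xs ! i = (map2 (\<lambda>k a. [(k, a)]) ksl (butlast asl) @ [coeff_of sc [(1, k)] (last asl)]) ! i"
    proof (cases "i < nl - 1")
      case True
      then show ?thesis using X(2)[of i] i las lks nl1 nr1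
        by (simp add: ksl_def asl_def nth_append nth_butlast)
    next
      case False
      then have "i = nl - 1" using i by simp
      moreover have "last (take nl as) = as ! (nl - 1)"
        using las nl1 by (subst last_conv_nth) (auto simp: min_def)
      ultimately show ?thesis using X(2)[of i] i las lks nl1 nr1
        by (simp add: ksl_def asl_def nth_append nth_butlast coeff_of_def k_def last_conv_nth)
    qed
  qed
  have dr: "drop nl xs = map2 (\<lambda>k a. [(k, a)]) ksr (butlast asr) @ [coeff_of sc xn (last asr)]"
  proof (rule nth_equalityI)
    show "length (drop nl xs) = length (map2 (\<lambda>k a. [(k, a)]) ksr (butlast asr) @ [coeff_of sc xn (last asr)])"
      using X las lks nl1 nr1 by (simp add: ksr_def asr_def)
  next
    fix i assume "i < length (drop nl xs)"
    then have i: "i < nr" using X las lks nl1 nr1 by simp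
    show "drop nl xs ! i = (map2 (\<lambda>k a. [(k, a)]) ksr (butlast asr) @ [coeff_of sc xn (last asr)]) ! i"
    proof (cases "i < nr - 1")
      case True
      then show ?thesis using X(1) X(2)[of "nl + i"] i las lks nl1 nr1
        by (simp add: ksr_def asr_def nth_append nth_butlast)
    next
      case False
      then have "i = nr - 1" using i by simp
      moreover have "last as = as ! (nl + nr - 1)"
        using las nl1 by (subst last_conv_nth) auto
      ultimately show ?thesis using X(1) X(3) i las lks nl1 nr1
        by (simp add: ksr_def asr_def nth_append nth_butlast last_conv_nth)
    qed
  qed
  define A where "A = tstar sc pr l asl"
  define B where "B = tstar sc pr r asr"
  have IHl: "coeff_fun (evalC sc pr l (take nl xs)) = coeff_fun (Phi ksl [(1, k)] A)"
    unfolding tk A_def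
    by (rule BNode.IH(1)) (use las lks nl1 nr1 in \<open>simp_all add: asl_def ksl_def nl_def\<close>)
  have IHr: "coeff_fun (evalC sc pr r (drop nl xs)) = coeff_fun (Phi ksr xn B)"
    unfolding dr B_def
    by (rule BNode.IH(2)) (use las lks nl1 nr1 in \<open>simp_all add: asr_def ksr_def nr_def nl_def\<close>)
  have lksl: "length ksl = nl - 1" using lks nl1 by (simp add: ksl_def)
  have lksr: "length ksr = nr - 1" using lks nl1 by (simp add: ksr_def)
  have nksl: "\<And>i. i < nl - 1 \<Longrightarrow> ksl ! i = ks ! i" by (simp add: ksl_def)
  have nksr: "\<And>i. i < nr - 1 \<Longrightarrow> ksr ! i = ks ! (nl + i)" using lks nl1 by (simp add: ksr_def)
  define P where "P e = k + (\<Sum>i<nl - 1. ks ! i - int (e ! i))" for e :: "nat list"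
  define Q where "Q e = (\<Sum>i<nr - 1. ks ! (nl + i) - int (e ! i))" for e :: "nat list"
  define \<alpha> where "\<alpha> e = (\<Prod>i<nl - 1. ffs (ks ! i) (e ! i) :: 'k)" for e :: "nat list"
  define \<beta> where "\<beta> e = (\<Prod>i<nr - 1. ffs (ks ! (nl + i)) (e ! i) :: 'k)" for e :: "nat list"
  have PhiL: "Phi ksl [(1, k)] A = map (\<lambda>a. (P (fst a), sc (\<alpha> (fst a)) (snd a))) A"
  proof -
    have "(\<Sum>i<length ksl. ksl ! i - int (e ! i)) = (\<Sum>i<nl - 1. ks ! i - int (e ! i))" for e
      unfolding lksl by (intro sum.cong refl) (simp add: nksl)
    moreover have "(\<Prod>i<length ksl. ffs (ksl ! i) (e ! i)) = \<alpha> e" for e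
      unfolding lksl \<alpha>_def by (intro prod.cong refl) (simp add: nksl)
    ultimately show ?thesis
      unfolding Phi_def by (induction A) (simp_all add: split_def P_def add.commute)
  qed
  have PhiR: "Phi ksr xn B = concat (map (\<lambda>b. map (\<lambda>q. (snd q + Q (fst b), sc (fst q * \<beta> (fst b)) (snd b))) xn) B)"
  proof -
    have "(\<Sum>i<length ksr. ksr ! i - int (e ! i)) = Q e" for e
      unfolding lksr Q_def by (intro sum.cong refl) (simp add: nksr)
    moreover have "(\<Prod>i<length ksr. ffs (ksr ! i) (e ! i)) = \<beta> e" for e
      unfolding lksr \<beta>_def by (intro prod.cong refl) (simp add: nksr)
    ultimately show ?thesis
      unfolding Phi_def by (simp add: split_def)
  qed
  have L: "coeff_fun (cmul sc pr (Phi ksl [(1, k)] A) (Phi ksr xn B)) =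
     (\<Sum>a\<leftarrow>A. \<Sum>b\<leftarrow>B. \<Sum>q\<leftarrow>xn. mulS (loc_bound pr (snd a) (snd b)) (P (fst a)) (sc (\<alpha> (fst a)) (snd a))
          (snd q + Q (fst b)) (sc (fst q * \<beta> (fst b)) (snd b)))"
    unfolding PhiL PhiR cmul_conv
    by (simp only: map_map comp_def sum_list_map_concat fst_conv snd_conv mulS_scaled_lb)
  have invA: "length (fst a) = nl \<and> fst a ! (nl - 1) = 0" if "a \<in> set A" for a
    using tstar_inv that unfolding A_def nl_def by blast
  have invB: "length (fst b) = nr" if "b \<in> set B" for b
    using tstar_inv that unfolding B_def nr_def by blast
  have R: "coeff_fun (Phi ks xn (ep sc pr A B)) =
     (\<Sum>a\<leftarrow>A. \<Sum>b\<leftarrow>B. \<Sum>q\<leftarrow>xn. mulS (loc_bound pr (snd a) (snd b)) (P (fst a)) (sc (\<alpha> (fst a)) (snd a))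
          (snd q + Q (fst b)) (sc (fst q * \<beta> (fst b)) (snd b)))"
  proof (subst coeff_Phi_ep, rule arg_cong[where f=sum_list], rule map_cong[OF refl], rule arg_cong[where f=sum_list], rule map_cong[OF refl])
    fix a b assume a: "a \<in> set A" and b: "b \<in> set B"
    have "coeff_fun (Phi ks xn (ep sc pr [(fst a, snd a)] [(fst b, snd b)])) = (\<Sum>q\<leftarrow>xn. mulS (loc_bound pr (snd a) (snd b)) (P (fst a)) (sc (\<alpha> (fst a)) (snd a))
          (snd q + Q (fst b)) (sc (fst q * \<beta> (fst b)) (snd b)))"
      unfolding P_def Q_def \<alpha>_def \<beta>_def k_def
    proof (rule pair)
      show "length (fst a) = nl" "fst a ! (nl - 1) = 0" using invA[OF a] by auto
      show "length (fst b) = nr" using invB[OF b] .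
    qed (fact nl1 nr1 lks)+
    then show "coeff_fun (Phi ks xn (ep sc pr [a] [b])) = (\<Sum>q\<leftarrow>xn. mulS (loc_bound pr (snd a) (snd b)) (P (fst a)) (sc (\<alpha> (fst a)) (snd a))
          (snd q + Q (fst b)) (sc (fst q * \<beta> (fst b)) (snd b)))"
      by simp
  qed
  have ev: "evalC sc pr (BNode l r) xs = cmul sc pr (evalC sc pr l (take nl xs)) (evalC sc pr r (drop nl xs))"
    by (simp add: nl_def)
  have ts: "tstar sc pr (BNode l r) as = ep sc pr A B"
    by (simp add: A_def B_def asl_def asr_def nl_def)
  show ?case
    unfolding xs_def[symmetric] ev ts cmul_resp[OF IHl IHr] L R ..
qed

end



lemma sum_list_single_point:
  assumes "distinct L" "x0 \<in> set L" "\<And>x. x \<in> set L \<Longrightarrow> x \<noteq> x0 \<Longrightarrow> g x = (0::'a::comm_monoid_add)"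
  shows "sum_list (map g L) = g x0"
proof -
  have "sum_list (map g L) = (\<Sum>x\<in>set L. g x)" using assms(1) by (simp add: sum_list_distinct_conv_sum_set)
  also have "\<dots> = g x0 + (\<Sum>x\<in>set L - {x0}. g x)" using assms(2) by (simp add: sum.remove)
  also have "(\<Sum>x\<in>set L - {x0}. g x) = 0" using assms(3) by (intro sum.neutral) auto
  finally show ?thesis by simp
qed

lemma theta_simp:
  "(\<forall>p\<in>set A. last (fst p) = 0) \<Longrightarrow> theta D A = map (\<lambda>p. (butlast (fst p), snd p)) A"
  unfolding theta_def by (induction A) (auto simp: split_def)

lemma pairing_prod:
  assumes "length ss = m" "length e \<ge> m"
  shows "(\<Prod>i<m. (-1) ^ (ss ! i) * pairing (ss ! i) (e ! i) :: 'k::field_char_0) =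
    (if ss = take m e then (\<Prod>i<m. (-1) ^ (e ! i) * fact (e ! i)) else 0)"
proof (cases "ss = take m e")
  case True
  then show ?thesis using assms by (auto simp: pairing_def intro!: prod.cong)
next
  case False
  then obtain i where i: "i < m" "ss ! i \<noteq> e ! i"
    using assms by (metis length_take min.absorb2 nth_equalityI nth_take)
  then have "(-1) ^ (ss ! i) * pairing (ss ! i) (e ! i) = (0::'k)" by (simp add: pairing_def)
  then show ?thesis using False i by (auto intro: prod_zero)
qed

context ca begin

lemma fun_module: "module (\<lambda>r (f :: int \<Rightarrow> 'c) j. sc r (f j))"
  by unfold_locales (simp_all add: fun_eq_iff scale_right_distrib scale_left_distrib)

lemma coeff_eqI: "coeff_fun X = coeff_fun Y \<Longrightarrow> coeff_eq sc D X Y"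
  unfolding coeff_eq_def using module.span_zero[OF fun_module] by (simp add: zero_fun_def)

end

theorem lemma3p1:
  fixes sc :: "'k::field_char_0 \<Rightarrow> 'c::ab_group_add \<Rightarrow> 'c"
    and D :: "'c \<Rightarrow> 'c"
    and pr :: "nat \<Rightarrow> 'c \<Rightarrow> 'c \<Rightarrow> 'c"
    and t :: bmon
    and as :: "'c list"
    and ks :: "int list"
    and xn :: "('k \<times> int) list"
  assumes "conformal_algebra sc D pr"
    and "length as = leaves t"
    and "length ks = leaves t - 1"
  shows "let n = leaves t;
             lhs = evalC sc pr t (map2 (\<lambda>k a. [(k, a)]) ks (butlast as) @ [coeff_of sc xn (last as)]);
             term = (\<lambda>ss. coeff_scale sc (\<Prod>i<n - 1. (of_int (ks ! i) :: 'k) gchoose (ss ! i))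
                       (Py sc D (laurent_shift (\<Sum>i<n - 1. ks ! i - int (ss ! i)) xn) ss (tstar sc pr t as)))
         in \<exists>SS. distinct SS \<and> (\<forall>ss\<in>set SS. length ss = n - 1) \<and>
                 (\<forall>ss. length ss = n - 1 \<and> ss \<notin> set SS \<longrightarrow> coeff_eq sc D (term ss) []) \<and>
                 coeff_eq sc D lhs (concat (map term SS))"
proof -
  interpret ca sc D pr by unfold_locales (rule assms(1))
  define n where "n = leaves t"
  define A where "A = tstar sc pr t as"
  define B where "B = Suc (\<Sum>p\<leftarrow>A. sum_list (fst p))"
  define SS where "SS = List.n_lists (n - 1) [0..<B]"
  define C where "C ss = (\<Prod>i<n - 1. (of_int (ks ! i) :: 'k) gchoose (ss ! i))" for ss :: "nat list"
  define S where "S ss = (\<Sum>i<n - 1. ks ! i - int (ss ! i))" for ss :: "nat list"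
  define w where "w ss p = (\<Prod>i<n - 1. (-1) ^ (ss ! i) * pairing (ss ! i) (fst p ! i) :: 'k)" for ss :: "nat list" and p :: "nat list \<times> 'c"
  define trm where "trm ss = coeff_scale sc (C ss) (Py sc D (laurent_shift (S ss) xn) ss A)" for ss
  have inv: "length (fst p) = n \<and> fst p ! (n - 1) = 0" if "p \<in> set A" for p
    using tstar_inv that unfolding A_def n_def by blast
  have n1: "n \<ge> 1" unfolding n_def by (rule leaves_pos)
  have lastA: "\<forall>p\<in>set A. last (fst p) = 0"
  proof
    fix p assume "p \<in> set A"
    with inv[OF this] n1 show "last (fst p) = 0" by (subst last_conv_nth) auto
  qed
  have Pmon: "Pmon sc D ss A = (\<Sum>p\<leftarrow>A. sc (w ss p) (snd p))" if "length ss = n - 1" for ss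
    unfolding Pmon_def theta_simp[OF lastA] map_map comp_def w_def that
    by (intro arg_cong[where f=sum_list] map_cong refl)
       (auto simp: nth_butlast inv intro!: prod.cong arg_cong2[where f=sc])
  have trm_cf: "coeff_fun (trm ss) = (\<Sum>q\<leftarrow>xn. \<Sum>p\<leftarrow>A. single (snd q + S ss) (sc (C ss * fst q * w ss p) (snd p)))"
    if "length ss = n - 1" for ss
    unfolding trm_def coeff_scale_def Py_def coeff_of_def laurent_shift_def Pmon[OF that] coeff_fun_map
    by (simp add: split_def comp_def scale_sum_list single_sum_list add.commute mult.assoc)
  show ?thesis
    unfolding Let_def n_def[symmetric] A_def[symmetric] C_def[symmetric] S_def[symmetric] trm_def[symmetric]
  proof (intro exI[of _ SS] conjI allI impI)
    show "distinct SS" unfolding SS_def by (intro distinct_n_lists) simp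
    show "\<forall>ss\<in>set SS. length ss = n - 1" unfolding SS_def by (auto dest: length_n_lists_elem)
  next
    fix ss assume ss: "length ss = n - 1 \<and> ss \<notin> set SS"
    then obtain i where i: "i < n - 1" "ss ! i \<ge> B"
      unfolding SS_def set_n_lists by (auto simp: in_set_conv_nth subset_iff) 
    have "w ss p = 0" if "p \<in> set A" for p
    proof -
      have "fst p ! i \<le> sum_list (fst p)"
        using inv[OF that] i by (intro member_le_sum_list) auto
      also have "\<dots> \<le> (\<Sum>p\<leftarrow>A. sum_list (fst p))"
        using that by (intro member_le_sum_list) auto
      finally have "fst p ! i \<noteq> ss ! i" using i unfolding B_def by auto
      then have "(-1) ^ (ss ! i) * pairing (ss ! i) (fst p ! i) = (0::'k)" by (simp add: pairing_def)
      then show ?thesis unfolding w_def using i by (intro prod_zero) auto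
    qed
    then have "coeff_fun (trm ss) = 0"
      unfolding trm_cf[OF conjunct1[OF ss]] by (simp cong: map_cong)
    then show "coeff_eq sc D (trm ss) []" by (intro coeff_eqI) simp
  next
    show "coeff_eq sc D (evalC sc pr t (map2 (\<lambda>k a. [(k, a)]) ks (butlast as) @ [coeff_of sc xn (last as)])) (concat (map trm SS))"
    proof (rule coeff_eqI)
      define G where "G ss q p = single (snd q + S ss) (sc (C ss * fst q * w ss p) (snd p))"
        for ss :: "nat list" and q :: "'k \<times> int" and p :: "nat list \<times> 'c"
      have lss: "length ss = n - 1" if "ss \<in> set SS" for ss
        using that unfolding SS_def by (rule length_n_lists_elem)
      have "coeff_fun (concat (map trm SS)) = (\<Sum>ss\<leftarrow>SS. \<Sum>q\<leftarrow>xn. \<Sum>p\<leftarrow>A. G ss q p)"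
        unfolding coeff_fun_concat map_map comp_def G_def
        by (rule arg_cong[where f=sum_list], rule map_cong[OF refl], rule trm_cf, rule lss)
      also have "\<dots> = (\<Sum>q\<leftarrow>xn. \<Sum>ss\<leftarrow>SS. \<Sum>p\<leftarrow>A. G ss q p)"
        by (rule sum_list_swap)
      also have "\<dots> = (\<Sum>q\<leftarrow>xn. \<Sum>p\<leftarrow>A. \<Sum>ss\<leftarrow>SS. G ss q p)"
        by (rule arg_cong[where f=sum_list], rule map_cong[OF refl], rule sum_list_swap)
      also have "\<dots> = (\<Sum>p\<leftarrow>A. \<Sum>q\<leftarrow>xn. \<Sum>ss\<leftarrow>SS. G ss q p)"
        by (rule sum_list_swap)
      also have "\<dots> = (\<Sum>p\<leftarrow>A. \<Sum>q\<leftarrow>xn. single (snd q + (\<Sum>i<length ks. ks ! i - int (fst p ! i)))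
            (sc (fst q * (\<Prod>i<length ks. ffs (ks ! i) (fst p ! i))) (snd p)))"
      proof (rule arg_cong[where f=sum_list], rule map_cong[OF refl], rule arg_cong[where f=sum_list], rule map_cong[OF refl])
        fix p q assume p: "p \<in> set A" and q: "q \<in> set xn"
        define ss0 where "ss0 = take (n - 1) (fst p)"
        have lp: "length (fst p) = n" using inv[OF p] by simp
        have lss0: "length ss0 = n - 1" using lp by (simp add: ss0_def)
        have ss0n: "ss0 ! i = fst p ! i" if "i < n - 1" for i using that by (simp add: ss0_def)
        have "ss0 \<in> set SS"
          unfolding SS_def set_n_lists
        proof (intro CollectI conjI lss0 subsetI)
          fix v assume "v \<in> set ss0"
          then have "v \<in> set (fst p)" unfolding ss0_def by (rule in_set_takeD)
          then have "v \<le> sum_list (fst p)" by (intro member_le_sum_list) simp_all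
          also have "\<dots> \<le> (\<Sum>p\<leftarrow>A. sum_list (fst p))"
            using p by (intro member_le_sum_list) auto
          finally show "v \<in> set [0..<B]" unfolding B_def by auto
        qed
        have wp: "w ss p = (if ss = ss0 then (\<Prod>i<n - 1. (-1) ^ (fst p ! i) * fact (fst p ! i)) else 0)"
          if "length ss = n - 1" for ss
          unfolding w_def ss0_def by (rule pairing_prod) (use that lp in auto)
        have "(\<Sum>ss\<leftarrow>SS. G ss q p) = G ss0 q p"
        proof (rule sum_list_single_point)
          show "distinct SS" unfolding SS_def by (intro distinct_n_lists) simp
          show "ss0 \<in> set SS" by fact
          fix ss assume "ss \<in> set SS" "ss \<noteq> ss0"
          then show "G ss q p = 0" using wp[OF lss] by (simp add: G_def)
        qed
        also have "\<dots> = single (snd q + (\<Sum>i<length ks. ks ! i - int (fst p ! i)))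
            (sc (fst q * (\<Prod>i<length ks. ffs (ks ! i) (fst p ! i))) (snd p))"
        proof -
          have lk: "length ks = n - 1" using assms(3) by (simp add: n_def)
          have "S ss0 = (\<Sum>i<length ks. ks ! i - int (fst p ! i))"
            unfolding S_def lk by (intro sum.cong refl) (simp add: ss0n)
          moreover have "C ss0 * fst q * w ss0 p = fst q * (\<Prod>i<length ks. ffs (ks ! i) (fst p ! i))"
          proof -
            have "C ss0 = (\<Prod>i<n - 1. (of_int (ks ! i) :: 'k) gchoose (fst p ! i))"
              unfolding C_def by (intro prod.cong refl) (simp add: ss0n)
            then show ?thesis
              unfolding wp[OF lss0] lk ffs_def by (simp add: prod.distrib[symmetric] mult_ac)
          qed
          ultimately show ?thesis by (simp only: G_def)
        qed
        finally show "(\<Sum>ss\<leftarrow>SS. G ss q p) = single (snd q + (\<Sum>i<length ks. ks ! i - int (fst p ! i)))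
            (sc (fst q * (\<Prod>i<length ks. ffs (ks ! i) (fst p ! i))) (snd p))" .
      qed
      also have "\<dots> = coeff_fun (Phi ks xn A)"
        using coeff_Phi_map[of ks xn id A] by simp
      also have "\<dots> = coeff_fun (evalC sc pr t (map2 (\<lambda>k a. [(k, a)]) ks (butlast as) @ [coeff_of sc xn (last as)]))"
        unfolding A_def by (rule main[symmetric]) (use assms in auto)
      finally show "coeff_fun (evalC sc pr t (map2 (\<lambda>k a. [(k, a)]) ks (butlast as) @ [coeff_of sc xn (last as)])) = coeff_fun (concat (map trm SS))" ..
    qed
  qed
qed


end
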